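(* Let $M$ be a finite-horizon MDP with an offline dataset $\mathcal D$ and dataset-induced MDP $M_{\mathcal D}$, and let $\pi$ be batch-constrained with respect to $\mathcal D$. If $\max_{(s,a):\rho_\pi^{M_{\mathcal D}}(s,a)>0}\|P^{M_{\mathcal D}}(\cdot\mid s,a)-P^M(\cdot\mid s,a)\|_1\le\epsilon_P$ and $\max_{(s,a,r):\rho_\pi^{M_{\mathcal D}}(s,a)>0}|R^{M_{\mathcal D}}(r\mid s,a)-R^M(r\mid s,a)|\le\epsilon_R$, then $$\|\rho_\pi^M(s)-\rho_\pi^{M_{\mathcal D}}(s)\|_1+\|\rho_\pi^M(s,a,r)-\rho_\pi^{M_{\mathcal D}}(s,a,r)\|_1\le|\mathcal S|(|\mathcal A||\mathcal R|+1)\frac{H-1}{2}\epsilon_P+|\mathcal S||\mathcal A||\mathcal R|\epsilon_R.$$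
   Context: $M=(\mathcal S,\mathcal A,\mathcal R,H,P^M,R^M)$ is a finite-horizon MDP with finite spaces, fixed initial state $s_0$, state space partitioned into disjoint timestep layers $\mathcal S_h$. Visitation distributions: $\rho_\pi(s_0)=1/H$, $\rho_\pi(s)=\sum_{\tilde s\in\mathcal S_{h-1},\tilde a}\rho_\pi(\tilde s)\pi(\tilde a\mid\tilde s)P(s\mid\tilde s,\tilde a)$ for $s\in\mathcal S_h$, $h>0$; $\rho_\pi(s,a)=\rho_\pi(s)\pi(a\mid s)$; $\rho_\pi(s,a,r)=\rho_\pi(s,a)R(r\mid s,a)$. $M_{\mathcal D}$ has empirical transitions $N(s,a,s')/N(s,a)$ and rewards $N(s,a,r)/N(s,a)$ when $N(s,a)>0$ and $0$ otherwise ($N$ counts occurrences in $\mathcal D$). $\pi$ is batch-constrained if $\pi(a\mid s)=0$ whenever $(s,a)$ does not appear in $\mathcal D$. *)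

theory Defs
  imports Complex_Main
begin

text \<open>A transition kernel is P s a s' = P(s' | s, a); a reward kernel is R s a r = R(r | s, a);
  a policy is pol s a = pi(a | s).\<close>

type_synonym ('s,'a,'r) dataset = "('s \<times> 'a \<times> 'r \<times> 's) list"

definition N_sa :: "('s,'a,'r) dataset \<Rightarrow> 's \<Rightarrow> 'a \<Rightarrow> nat" where
  "N_sa D s a = length (filter (\<lambda>(s1,a1,r1,t1). s1 = s \<and> a1 = a) D)"

definition N_sas :: "('s,'a,'r) dataset \<Rightarrow> 's \<Rightarrow> 'a \<Rightarrow> 's \<Rightarrow> nat" where
  "N_sas D s a t = length (filter (\<lambda>(s1,a1,r1,t1). s1 = s \<and> a1 = a \<and> t1 = t) D)"

definition N_sar :: "('s,'a,'r) dataset \<Rightarrow> 's \<Rightarrow> 'a \<Rightarrow> 'r \<Rightarrow> nat" where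
  "N_sar D s a r = length (filter (\<lambda>(s1,a1,r1,t1). s1 = s \<and> a1 = a \<and> r1 = r) D)"

definition P_D :: "('s,'a,'r) dataset \<Rightarrow> 's \<Rightarrow> 'a \<Rightarrow> 's \<Rightarrow> real" where
  "P_D D s a t = (if N_sa D s a > 0 then real (N_sas D s a t) / real (N_sa D s a) else 0)"

definition R_D :: "('s,'a,'r) dataset \<Rightarrow> 's \<Rightarrow> 'a \<Rightarrow> 'r \<Rightarrow> real" where
  "R_D D s a r = (if N_sa D s a > 0 then real (N_sar D s a r) / real (N_sa D s a) else 0)"

definition batch_constrained :: "('s,'a,'r) dataset \<Rightarrow> ('s \<Rightarrow> 'a \<Rightarrow> real) \<Rightarrow> bool" where
  "batch_constrained D pol \<longleftrightarrow> (\<forall>s a. (\<forall>r t. (s,a,r,t) \<notin> set D) \<longrightarrow> pol s a = 0)"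

fun rho_layer :: "nat \<Rightarrow> ('s \<Rightarrow> nat) \<Rightarrow> 's \<Rightarrow> ('s \<Rightarrow> 'a \<Rightarrow> 's \<Rightarrow> real)
    \<Rightarrow> ('s \<Rightarrow> 'a \<Rightarrow> real) \<Rightarrow> nat \<Rightarrow> 's \<Rightarrow> real" where
  "rho_layer H layer s0 P pol 0 s = (if s = s0 then 1 / real H else 0)"
| "rho_layer H layer s0 P pol (Suc h) s =
     (\<Sum>s1\<in>{x. layer x = h}. \<Sum>a\<in>UNIV. rho_layer H layer s0 P pol h s1 * pol s1 a * P s1 a s)"

definition rho_s :: "nat \<Rightarrow> ('s \<Rightarrow> nat) \<Rightarrow> 's \<Rightarrow> ('s \<Rightarrow> 'a::finite \<Rightarrow> 's \<Rightarrow> real)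
    \<Rightarrow> ('s \<Rightarrow> 'a \<Rightarrow> real) \<Rightarrow> 's \<Rightarrow> real" where
  "rho_s H layer s0 P pol s = rho_layer H layer s0 P pol (layer s) s"

definition rho_sa :: "nat \<Rightarrow> ('s \<Rightarrow> nat) \<Rightarrow> 's \<Rightarrow> ('s \<Rightarrow> 'a::finite \<Rightarrow> 's \<Rightarrow> real)
    \<Rightarrow> ('s \<Rightarrow> 'a \<Rightarrow> real) \<Rightarrow> 's \<Rightarrow> 'a \<Rightarrow> real" where
  "rho_sa H layer s0 P pol s a = rho_s H layer s0 P pol s * pol s a"

definition rho_sar :: "nat \<Rightarrow> ('s \<Rightarrow> nat) \<Rightarrow> 's \<Rightarrow> ('s \<Rightarrow> 'a::finite \<Rightarrow> 's \<Rightarrow> real)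
    \<Rightarrow> ('s \<Rightarrow> 'a \<Rightarrow> 'r \<Rightarrow> real) \<Rightarrow> ('s \<Rightarrow> 'a \<Rightarrow> real) \<Rightarrow> 's \<Rightarrow> 'a \<Rightarrow> 'r \<Rightarrow> real" where
  "rho_sar H layer s0 P R pol s a r = rho_sa H layer s0 P pol s a * R s a r"

end

theory Submission
  imports Defs
begin

lemma N_sas_sum: "(\<Sum>t\<in>(UNIV::'s::finite set). N_sas D s a t) = N_sa D s a"
proof (induction D)
  case Nil
  then show ?case by (simp add: N_sas_def N_sa_def)
next
  case (Cons x D)
  obtain s1 a1 r1 t1 where x: "x = (s1,a1,r1,t1)" by (cases x) auto
  have "(\<Sum>t\<in>(UNIV::'s set). N_sas (x#D) s a t)
      = (\<Sum>t\<in>(UNIV::'s set). (if s1 = s \<and> a1 = a \<and> t1 = t then 1 else 0) + N_sas D s a t)"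
    by (intro sum.cong refl) (simp add: N_sas_def x)
  also have "\<dots> = (if s1 = s \<and> a1 = a then 1 else 0) + N_sa D s a"
    by (auto simp: sum.distrib Cons)
  also have "\<dots> = N_sa (x#D) s a" by (simp add: N_sa_def x)
  finally show ?case .
qed

lemma P_D_sum_le: "(\<Sum>t\<in>(UNIV::'s::finite set). P_D D s a t) \<le> 1"
proof (cases "N_sa D s a > 0")
  case True
  have "(\<Sum>t\<in>(UNIV::'s set). P_D D s a t) = (\<Sum>t\<in>UNIV. real (N_sas D s a t)) / real (N_sa D s a)"
    using True by (simp add: P_D_def sum_divide_distrib)
  also have "\<dots> = 1" using True by (simp only: of_nat_sum[symmetric] N_sas_sum) simp
  finally show ?thesis by simp
next
  case False
  then show ?thesis by (simp add: P_D_def)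
qed

lemma P_D_nonneg: "P_D D s a t \<ge> 0"
  by (simp add: P_D_def)

lemma swap3: "(\<Sum>s\<in>(UNIV::'s::finite set). \<Sum>s1\<in>A. \<Sum>a\<in>(UNIV::'a::finite set). f s1 a s)
   = (\<Sum>s1\<in>A. \<Sum>a\<in>UNIV. \<Sum>s\<in>UNIV. f s1 a s)"
  apply (rule trans[OF sum.swap])
  apply (rule sum.cong[OF refl])
  apply (rule sum.swap)
  done

lemma gauss_real: "(\<Sum>h<n. real h) = real n * (real n - 1) / 2"
  by (induction n) (auto simp: field_simps)

theorem lemma6:
  fixes H :: nat and layer :: "'s::finite \<Rightarrow> nat" and s0 :: 's
    and P :: "'s \<Rightarrow> 'a::finite \<Rightarrow> 's \<Rightarrow> real"
    and R :: "'s \<Rightarrow> 'a \<Rightarrow> 'r::finite \<Rightarrow> real"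
    and pol :: "'s \<Rightarrow> 'a \<Rightarrow> real"
    and D :: "('s,'a,'r) dataset"
    and epsP epsR :: real
  assumes layers: "\<forall>s. layer s < H" and init: "layer s0 = 0"
    and P_nonneg: "\<forall>s a t. P s a t \<ge> 0" and P_sum: "\<forall>s a. (\<Sum>t\<in>UNIV. P s a t) = 1"
    and R_nonneg: "\<forall>s a r. R s a r \<ge> 0" and R_sum: "\<forall>s a. (\<Sum>r\<in>UNIV. R s a r) = 1"
    and pol_nonneg: "\<forall>s a. pol s a \<ge> 0" and pol_sum: "\<forall>s. (\<Sum>a\<in>UNIV. pol s a) = 1"
    and bc: "batch_constrained D pol"
    and hP: "\<forall>s a. rho_sa H layer s0 (P_D D) pol s a > 0 \<longrightarrow>
               (\<Sum>t\<in>UNIV. \<bar>P_D D s a t - P s a t\<bar>) \<le> epsP"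
    and hR: "\<forall>s a r. rho_sa H layer s0 (P_D D) pol s a > 0 \<longrightarrow>
               \<bar>R_D D s a r - R s a r\<bar> \<le> epsR"
  shows "(\<Sum>s\<in>UNIV. \<bar>rho_s H layer s0 P pol s - rho_s H layer s0 (P_D D) pol s\<bar>)
       + (\<Sum>s\<in>UNIV. \<Sum>a\<in>UNIV. \<Sum>r\<in>UNIV.
            \<bar>rho_sar H layer s0 P R pol s a r - rho_sar H layer s0 (P_D D) (R_D D) pol s a r\<bar>)
       \<le> real (card (UNIV :: 's set)) * (real (card (UNIV :: 'a set)) * real (card (UNIV :: 'r set)) + 1) * ((real H - 1) / 2) * epsP
         + real (card (UNIV :: 's set)) * real (card (UNIV :: 'a set)) * real (card (UNIV :: 'r set)) * epsR"
proof -
  define L where "L h = {x::'s. layer x = h}" for h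
  define rM where "rM = rho_layer H layer s0 P pol"
  define rD where "rD = rho_layer H layer s0 (P_D D) pol"
  define d where "d h = (\<Sum>s\<in>L h. \<bar>rM h s - rD h s\<bar>)" for h
  define m where "m h = (\<Sum>s\<in>L h. rD h s)" for h
  have Hpos: "H > 0" using layers by (metis gr_zeroI less_nat_zero_code)
  have rM_Suc: "rM (Suc h) s = (\<Sum>s1\<in>L h. \<Sum>a\<in>UNIV. rM h s1 * pol s1 a * P s1 a s)" for h s
    by (simp add: rM_def L_def)
  have rD_Suc: "rD (Suc h) s = (\<Sum>s1\<in>L h. \<Sum>a\<in>UNIV. rD h s1 * pol s1 a * P_D D s1 a s)" for h s
    by (simp add: rD_def L_def)
  have rM0: "rM 0 = rD 0" by (simp add: rM_def rD_def fun_eq_iff)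
  have rD_nn: "rD h s \<ge> 0" for h s
  proof (induction h arbitrary: s)
    case 0 then show ?case by (simp add: rD_def)
  next
    case (Suc h) then show ?case
      unfolding rD_Suc using pol_nonneg P_D_nonneg
      by (intro sum_nonneg mult_nonneg_nonneg) auto
  qed
  have rho_sD: "rho_s H layer s0 (P_D D) pol s = rD (layer s) s" for s
    by (simp add: rho_s_def rD_def)
  have rho_sM: "rho_s H layer s0 P pol s = rM (layer s) s" for s
    by (simp add: rho_s_def rM_def)
  have rho_saD: "rho_sa H layer s0 (P_D D) pol s a = rD (layer s) s * pol s a" for s a
    by (simp add: rho_sa_def rho_sD)
  obtain a0 where a0: "pol s0 a0 > 0"
  proof -
    have "\<exists>a. pol s0 a > 0"
    proof (rule ccontr)
      assume "\<not> ?thesis"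
      then have "\<forall>a. pol s0 a = 0" using pol_nonneg by (metis linorder_not_le order_antisym)
      then show False using pol_sum[rule_format, of s0] by simp
    qed
    then show ?thesis using that by blast
  qed
  have sa0: "rho_sa H layer s0 (P_D D) pol s0 a0 > 0"
    using a0 Hpos by (simp add: rho_saD init rD_def)
  have epsP_nn: "epsP \<ge> 0"
    using hP sa0 by (meson order_trans sum_nonneg abs_ge_zero)
  have epsR_nn: "epsR \<ge> 0"
    using hR sa0 by (meson order_trans abs_ge_zero)
  have m_le: "m h \<le> 1 / real H" for h
  proof (induction h)
    case 0
    have "m 0 = (\<Sum>s\<in>L 0. if s = s0 then 1 / real H else 0)"
      by (simp add: m_def rD_def)
    also have "\<dots> = 1 / real H" using init by (simp add: L_def)
    finally show ?case by simp
  next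
    case (Suc h)
    have "m (Suc h) = (\<Sum>s\<in>L (Suc h). \<Sum>s1\<in>L h. \<Sum>a\<in>UNIV. rD h s1 * pol s1 a * P_D D s1 a s)"
      by (simp add: m_def rD_Suc)
    also have "\<dots> \<le> (\<Sum>s\<in>UNIV. \<Sum>s1\<in>L h. \<Sum>a\<in>UNIV. rD h s1 * pol s1 a * P_D D s1 a s)"
      using rD_nn pol_nonneg P_D_nonneg
      by (intro sum_mono2) (auto intro!: sum_nonneg mult_nonneg_nonneg)
    also have "\<dots> = (\<Sum>s1\<in>L h. \<Sum>a\<in>UNIV. rD h s1 * pol s1 a * (\<Sum>s\<in>UNIV. P_D D s1 a s))"
      by (simp only: swap3 sum_distrib_left)
    also have "\<dots> \<le> (\<Sum>s1\<in>L h. \<Sum>a\<in>UNIV. rD h s1 * pol s1 a)"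
      by (intro sum_mono mult_left_le P_D_sum_le mult_nonneg_nonneg rD_nn) (simp add: pol_nonneg)
    also have "\<dots> = m h"
      using pol_sum by (simp add: m_def sum_distrib_left[symmetric])
    finally show ?case using Suc by simp
  qed
  have d_step: "d (Suc h) \<le> d h + epsP * m h" for h
  proof -
    define T where "T s1 a s = \<bar>rM h s1 - rD h s1\<bar> * pol s1 a * P s1 a s
        + rD h s1 * pol s1 a * \<bar>P_D D s1 a s - P s1 a s\<bar>" for s1 a s
    have T_nn: "T s1 a s \<ge> 0" for s1 a s
      unfolding T_def using rD_nn pol_nonneg P_nonneg by (auto intro!: add_nonneg_nonneg mult_nonneg_nonneg)
    have e1: "\<bar>rM (Suc h) s - rD (Suc h) s\<bar> \<le> (\<Sum>s1\<in>L h. \<Sum>a\<in>UNIV. T s1 a s)" for s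
    proof -
      have "rM (Suc h) s - rD (Suc h) s = (\<Sum>s1\<in>L h. \<Sum>a\<in>UNIV.
          rM h s1 * pol s1 a * P s1 a s - rD h s1 * pol s1 a * P_D D s1 a s)"
        by (simp add: rM_Suc rD_Suc sum_subtractf)
      also have "\<dots> = (\<Sum>s1\<in>L h. \<Sum>a\<in>UNIV. (rM h s1 - rD h s1) * pol s1 a * P s1 a s
          + rD h s1 * pol s1 a * (P s1 a s - P_D D s1 a s))"
        by (intro sum.cong refl) (simp add: algebra_simps)
      finally have eq: "\<bar>rM (Suc h) s - rD (Suc h) s\<bar> = \<bar>\<dots>\<bar>" by simp
      have "\<bar>(rM h s1 - rD h s1) * pol s1 a * P s1 a s
          + rD h s1 * pol s1 a * (P s1 a s - P_D D s1 a s)\<bar> \<le> T s1 a s" for s1 a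
      proof -
        have "\<bar>(rM h s1 - rD h s1) * pol s1 a * P s1 a s
          + rD h s1 * pol s1 a * (P s1 a s - P_D D s1 a s)\<bar>
          \<le> \<bar>(rM h s1 - rD h s1) * pol s1 a * P s1 a s\<bar>
          + \<bar>rD h s1 * pol s1 a * (P s1 a s - P_D D s1 a s)\<bar>" by (rule abs_triangle_ineq)
        also have "\<dots> = T s1 a s"
          using rD_nn[of h s1] pol_nonneg P_nonneg
          by (simp add: T_def abs_mult abs_minus_commute)
        finally show ?thesis .
      qed
      note bnd = this
      have "\<bar>\<Sum>s1\<in>L h. \<Sum>a\<in>UNIV. (rM h s1 - rD h s1) * pol s1 a * P s1 a s
          + rD h s1 * pol s1 a * (P s1 a s - P_D D s1 a s)\<bar> \<le> (\<Sum>s1\<in>L h. \<Sum>a\<in>UNIV. T s1 a s)"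
        by (rule order_trans[OF sum_abs sum_mono], rule order_trans[OF sum_abs sum_mono], rule bnd)
      then show ?thesis using eq by simp
    qed
    have "d (Suc h) \<le> (\<Sum>s\<in>L (Suc h). \<Sum>s1\<in>L h. \<Sum>a\<in>UNIV. T s1 a s)"
      unfolding d_def by (intro sum_mono e1)
    also have "\<dots> \<le> (\<Sum>s\<in>UNIV. \<Sum>s1\<in>L h. \<Sum>a\<in>UNIV. T s1 a s)"
      using T_nn by (intro sum_mono2) (auto intro!: sum_nonneg)
    also have "\<dots> = (\<Sum>s1\<in>L h. \<Sum>a\<in>UNIV. \<bar>rM h s1 - rD h s1\<bar> * pol s1 a * (\<Sum>s\<in>UNIV. P s1 a s)
        + rD h s1 * pol s1 a * (\<Sum>s\<in>UNIV. \<bar>P_D D s1 a s - P s1 a s\<bar>))"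
      unfolding swap3 T_def sum.distrib sum_distrib_left by (simp only: mult.assoc)
    also have "\<dots> \<le> (\<Sum>s1\<in>L h. \<Sum>a\<in>UNIV. \<bar>rM h s1 - rD h s1\<bar> * pol s1 a + rD h s1 * pol s1 a * epsP)"
    proof (intro sum_mono)
      fix s1 a assume s1: "s1 \<in> L h"
      have "rD h s1 * pol s1 a * (\<Sum>s\<in>UNIV. \<bar>P_D D s1 a s - P s1 a s\<bar>) \<le> rD h s1 * pol s1 a * epsP"
      proof (cases "rD h s1 * pol s1 a > 0")
        case True
        then have "rho_sa H layer s0 (P_D D) pol s1 a > 0" using s1 by (simp add: rho_saD L_def)
        then have "(\<Sum>s\<in>UNIV. \<bar>P_D D s1 a s - P s1 a s\<bar>) \<le> epsP" using hP by blast
        then show ?thesis using True by (simp add: mult_left_mono)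
      next
        case False
        have "rD h s1 * pol s1 a \<ge> 0" using rD_nn[of h s1] pol_nonneg by simp
        then have "rD h s1 * pol s1 a = 0" using False by linarith
        then show ?thesis by (simp only: mult_zero_left order_refl)
      qed
      then show "\<bar>rM h s1 - rD h s1\<bar> * pol s1 a * (\<Sum>s\<in>UNIV. P s1 a s)
        + rD h s1 * pol s1 a * (\<Sum>s\<in>UNIV. \<bar>P_D D s1 a s - P s1 a s\<bar>)
        \<le> \<bar>rM h s1 - rD h s1\<bar> * pol s1 a + rD h s1 * pol s1 a * epsP"
        using P_sum by simp
    qed
    also have "\<dots> = d h + epsP * m h"
      using pol_sum
      by (simp add: d_def m_def sum.distrib sum_distrib_left[symmetric] sum_distrib_right[symmetric] mult.assoc mult.commute[of _ epsP])
    finally show ?thesis .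
  qed
  have d_le: "d h \<le> real h * epsP / real H" for h
  proof (induction h)
    case 0 then show ?case by (simp add: d_def rM0)
  next
    case (Suc h)
    have "epsP * m h \<le> epsP * (1 / real H)" using mult_left_mono[OF m_le[of h] epsP_nn] by simp
    moreover have "real (Suc h) * epsP / real H = real h * epsP / real H + epsP / real H"
      by (simp add: add_divide_distrib[symmetric] algebra_simps)
    ultimately show ?case using d_step[of h] Suc by simp
  qed
  have grp: "(\<Sum>s\<in>UNIV. g s) = (\<Sum>h<H. \<Sum>s\<in>L h. g s)" for g :: "'s \<Rightarrow> real"
    using sum.group[of UNIV "{..<H}" layer g] layers by (simp add: L_def image_subset_iff)
  define D1 where "D1 = (\<Sum>s\<in>UNIV. \<bar>rho_s H layer s0 P pol s - rho_s H layer s0 (P_D D) pol s\<bar>)"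
  have D1_eq: "D1 = (\<Sum>h<H. d h)"
    unfolding D1_def grp d_def
    by (intro sum.cong refl) (simp add: rho_sM rho_sD L_def)
  have D1_le: "D1 \<le> epsP * ((real H - 1) / 2)"
  proof -
    have "D1 \<le> (\<Sum>h<H. real h * epsP / real H)"
      unfolding D1_eq by (intro sum_mono d_le)
    also have "\<dots> = epsP / real H * (\<Sum>h<H. real h)"
      by (simp add: sum_distrib_left sum_divide_distrib mult.commute)
    also have "\<dots> = epsP * ((real H - 1) / 2)"
      using Hpos by (simp add: gauss_real)
    finally show ?thesis .
  qed
  have D1_nn: "D1 \<ge> 0" unfolding D1_def by (intro sum_nonneg) simp
  have mass: "(\<Sum>s\<in>UNIV. rD (layer s) s) \<le> 1"
  proof -
    have "(\<Sum>s\<in>UNIV. rD (layer s) s) = (\<Sum>h<H. m h)"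
      unfolding grp m_def by (intro sum.cong refl) (simp add: L_def)
    also have "\<dots> \<le> (\<Sum>h<H. 1 / real H)" by (intro sum_mono m_le)
    also have "\<dots> = 1" using Hpos by simp
    finally show ?thesis .
  qed
  define df where "df s = \<bar>rM (layer s) s - rD (layer s) s\<bar>" for s
  have sar_bnd: "\<bar>rho_sar H layer s0 P R pol s a r - rho_sar H layer s0 (P_D D) (R_D D) pol s a r\<bar>
      \<le> df s * pol s a * R s a r + rD (layer s) s * pol s a * epsR" for s a r
  proof -
    have eq: "rho_sar H layer s0 P R pol s a r - rho_sar H layer s0 (P_D D) (R_D D) pol s a r
      = (rM (layer s) s - rD (layer s) s) * pol s a * R s a r + rD (layer s) s * pol s a * (R s a r - R_D D s a r)"
      by (simp add: rho_sar_def rho_sa_def rho_sM rho_sD algebra_simps)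
    have "\<bar>(rM (layer s) s - rD (layer s) s) * pol s a * R s a r + rD (layer s) s * pol s a * (R s a r - R_D D s a r)\<bar>
      \<le> \<bar>(rM (layer s) s - rD (layer s) s) * pol s a * R s a r\<bar> + \<bar>rD (layer s) s * pol s a * (R s a r - R_D D s a r)\<bar>"
      by (rule abs_triangle_ineq)
    also have "\<dots> = df s * pol s a * R s a r + rD (layer s) s * pol s a * \<bar>R_D D s a r - R s a r\<bar>"
      using rD_nn[of "layer s" s] pol_nonneg R_nonneg
      by (simp add: df_def abs_mult abs_minus_commute)
    also have "\<dots> \<le> df s * pol s a * R s a r + rD (layer s) s * pol s a * epsR"
    proof -
      have "rD (layer s) s * pol s a * \<bar>R_D D s a r - R s a r\<bar> \<le> rD (layer s) s * pol s a * epsR"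
      proof (cases "rD (layer s) s * pol s a > 0")
        case True
        then have "rho_sa H layer s0 (P_D D) pol s a > 0" by (simp add: rho_saD)
        then have "\<bar>R_D D s a r - R s a r\<bar> \<le> epsR" using hR by blast
        then show ?thesis using True by (simp add: mult_left_mono)
      next
        case False
        have "rD (layer s) s * pol s a \<ge> 0" using rD_nn[of "layer s" s] pol_nonneg by simp
        then have "rD (layer s) s * pol s a = 0" using False by linarith
        then show ?thesis by (simp only: mult_zero_left order_refl)
      qed
      then show ?thesis by simp
    qed
    finally show ?thesis using eq by simp
  qed
  define cS where "cS = real (card (UNIV :: 's set))"
  define cA where "cA = real (card (UNIV :: 'a set))"
  define cR where "cR = real (card (UNIV :: 'r set))"
  have S2: "(\<Sum>s\<in>UNIV. \<Sum>a\<in>UNIV. \<Sum>r\<in>UNIV.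
            \<bar>rho_sar H layer s0 P R pol s a r - rho_sar H layer s0 (P_D D) (R_D D) pol s a r\<bar>)
        \<le> D1 + cR * epsR"
  proof -
    have "(\<Sum>s\<in>UNIV. \<Sum>a\<in>UNIV. \<Sum>r\<in>UNIV.
            \<bar>rho_sar H layer s0 P R pol s a r - rho_sar H layer s0 (P_D D) (R_D D) pol s a r\<bar>)
        \<le> (\<Sum>s\<in>UNIV. \<Sum>a\<in>UNIV. \<Sum>r\<in>UNIV. df s * pol s a * R s a r + rD (layer s) s * pol s a * epsR)"
      by (intro sum_mono sar_bnd)
    also have "\<dots> = (\<Sum>s\<in>UNIV. \<Sum>a\<in>UNIV. df s * pol s a + cR * (rD (layer s) s * pol s a * epsR))"
    proof (intro sum.cong refl)
      fix s a
      have "(\<Sum>r\<in>UNIV. df s * pol s a * R s a r) = df s * pol s a"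
        using R_sum by (simp add: sum_distrib_left[symmetric])
      then show "(\<Sum>r\<in>UNIV. df s * pol s a * R s a r + rD (layer s) s * pol s a * epsR)
          = df s * pol s a + cR * (rD (layer s) s * pol s a * epsR)"
        by (simp add: sum.distrib cR_def)
    qed
    also have "\<dots> = (\<Sum>s\<in>UNIV. df s + cR * epsR * rD (layer s) s)"
    proof (intro sum.cong refl)
      fix s
      have "(\<Sum>a\<in>UNIV. df s * pol s a + cR * (rD (layer s) s * pol s a * epsR))
         = df s * (\<Sum>a\<in>UNIV. pol s a) + (cR * epsR * rD (layer s) s) * (\<Sum>a\<in>UNIV. pol s a)"
        by (simp add: sum.distrib sum_distrib_left sum_distrib_right algebra_simps)
      then show "(\<Sum>a\<in>UNIV. df s * pol s a + cR * (rD (layer s) s * pol s a * epsR))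
         = df s + cR * epsR * rD (layer s) s" using pol_sum by simp
    qed
    also have "\<dots> = D1 + cR * epsR * (\<Sum>s\<in>UNIV. rD (layer s) s)"
      by (simp add: sum.distrib sum_distrib_left D1_def df_def rho_sM rho_sD)
    also have "\<dots> \<le> D1 + cR * epsR"
    proof -
      have "cR * epsR \<ge> 0" using epsR_nn by (simp add: cR_def)
      then show ?thesis using mult_left_mono[OF mass, of "cR * epsR"] by simp
    qed
    finally show ?thesis .
  qed
  have cS1: "cS \<ge> 1" unfolding cS_def by (simp add: Suc_le_eq finite_UNIV_card_ge_0)
  have cA1: "cA \<ge> 1" unfolding cA_def by (simp add: Suc_le_eq finite_UNIV_card_ge_0)
  have cR1: "cR \<ge> 1" unfolding cR_def by (simp add: Suc_le_eq finite_UNIV_card_ge_0)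
  have k1: "2 \<le> cS * (cA * cR + 1)"
  proof -
    have "1 \<le> cA * cR" using cA1 cR1 by (metis mult_mono mult_1 zero_le_one order_trans)
    then have "1 * 2 \<le> cS * (cA * cR + 1)" using cS1 by (intro mult_mono) auto
    then show ?thesis by simp
  qed
  have k2: "cR \<le> cS * cA * cR"
  proof -
    have "1 \<le> cS * cA" using cA1 cS1 by (metis mult_mono mult_1 zero_le_one order_trans)
    then have "1 * cR \<le> cS * cA * cR" using cR1 by (intro mult_right_mono) auto
    then show ?thesis by simp
  qed
  have Y: "(real H - 1) / 2 * epsP \<ge> 0" using Hpos epsP_nn by simp
  have t1: "2 * ((real H - 1) / 2 * epsP) \<le> cS * (cA * cR + 1) * ((real H - 1) / 2 * epsP)"
    by (rule mult_right_mono[OF k1 Y])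
  have t2: "cR * epsR \<le> cS * cA * cR * epsR"
    by (rule mult_right_mono[OF k2 epsR_nn])
  have "D1 + (D1 + cR * epsR) \<le> cS * (cA * cR + 1) * ((real H - 1) / 2) * epsP + cS * cA * cR * epsR"
  proof -
    have e1: "epsP * ((real H - 1) / 2) = (real H - 1) / 2 * epsP" by (rule mult.commute)
    have e2: "cS * (cA * cR + 1) * ((real H - 1) / 2 * epsP) = cS * (cA * cR + 1) * ((real H - 1) / 2) * epsP"
      by (rule mult.assoc[symmetric])
    show ?thesis using D1_le t1 t2 e1 e2 by linarith
  qed
  then show ?thesis using S2 unfolding D1_def cS_def cA_def cR_def by linarith
qed

end
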